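(* Let $V$ be a real Lorentzian vector space (signature $(1,q)$) of dimension $m=1+q\ge3$, and let $\nabla R$ be a covariant derivative algebraic curvature tensor on $V$. If $\operatorname{trace}\{\mathcal{S}_{\nabla R}(x)^2\}$ is constant for $x\in S^+(V)$ and constant for $x\in S^-(V)$, then $\nabla R=0$.
   Context: A covariant derivative algebraic curvature tensor is $\nabla R\in\otimes^5V^*$ satisfying $\nabla R(a,b,c,d;e)=-\nabla R(b,a,c,d;e)=\nabla R(c,d,a,b;e)$, $\nabla R(a,b,c,d;e)+\nabla R(a,c,d,b;e)+\nabla R(a,d,b,c;e)=0$, and $\nabla R(a,b,c,d;e)+\nabla R(a,b,d,e;c)+\nabla R(a,b,e,c;d)=0$. The Szab\'o operator is defined by $(\mathcal{S}_{\nabla R}(x)y,w)=\nabla R(y,x,x,w;x)$. $S^\pm(V)=\{v\in V:(v,v)=\pm1\}$. *)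

theory Defs
  imports "HOL-Analysis.Analysis"
begin

definition lorentzian :: "(real^'n \<Rightarrow> real^'n \<Rightarrow> real) \<Rightarrow> bool" where
  "lorentzian g \<longleftrightarrow> bilinear g \<and> (\<forall>x y. g x y = g y x) \<and>
     (\<exists>(e::'n \<Rightarrow> real^'n) t. independent (range e) \<and> inj e \<and>
        (\<forall>i j. i \<noteq> j \<longrightarrow> g (e i) (e j) = 0) \<and>
        g (e t) (e t) = -1 \<and> (\<forall>i. i \<noteq> t \<longrightarrow> g (e i) (e i) = 1))"

definition multilinear5 :: "(real^'n \<Rightarrow> real^'n \<Rightarrow> real^'n \<Rightarrow> real^'n \<Rightarrow> real^'n \<Rightarrow> real) \<Rightarrow> bool" where
  "multilinear5 T \<longleftrightarrow>
     (\<forall>b c d e. linear (\<lambda>a. T a b c d e)) \<and>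
     (\<forall>a c d e. linear (\<lambda>b. T a b c d e)) \<and>
     (\<forall>a b d e. linear (\<lambda>c. T a b c d e)) \<and>
     (\<forall>a b c e. linear (\<lambda>d. T a b c d e)) \<and>
     (\<forall>a b c d. linear (\<lambda>e. T a b c d e))"

text \<open>Covariant derivative algebraic curvature tensor; DR a b c d e stands for nabla R(a,b,c,d;e).\<close>
definition cov_deriv_alg_curv :: "(real^'n \<Rightarrow> real^'n \<Rightarrow> real^'n \<Rightarrow> real^'n \<Rightarrow> real^'n \<Rightarrow> real) \<Rightarrow> bool" where
  "cov_deriv_alg_curv DR \<longleftrightarrow> multilinear5 DR \<and>
     (\<forall>a b c d e. DR a b c d e = - DR b a c d e) \<and>
     (\<forall>a b c d e. DR a b c d e = DR c d a b e) \<and>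
     (\<forall>a b c d e. DR a b c d e + DR a c d b e + DR a d b c e = 0) \<and>
     (\<forall>a b c d e. DR a b c d e + DR a b d e c + DR a b e c d = 0)"

definition szabo :: "(real^'n \<Rightarrow> real^'n \<Rightarrow> real) \<Rightarrow>
    (real^'n \<Rightarrow> real^'n \<Rightarrow> real^'n \<Rightarrow> real^'n \<Rightarrow> real^'n \<Rightarrow> real) \<Rightarrow> real^'n \<Rightarrow> (real^'n \<Rightarrow> real^'n)" where
  "szabo g DR x = (THE f. linear f \<and> (\<forall>y w. g (f y) w = DR y x x w x))"

end

theory Submission
  imports Defs
begin

definition onb :: "(real^'n \<Rightarrow> real^'n \<Rightarrow> real) \<Rightarrow> ('n \<Rightarrow> real^'n) \<Rightarrow> 'n \<Rightarrow> bool" where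
  "onb g b t \<longleftrightarrow> (\<forall>k l. k \<noteq> l \<longrightarrow> g (b k) (b l) = 0) \<and> g (b t) (b t) = -1 \<and>
     (\<forall>k. k \<noteq> t \<longrightarrow> g (b k) (b k) = 1) \<and>
     (\<forall>y. y = (\<Sum>k\<in>UNIV. (g (b k) (b k) * g y (b k)) *\<^sub>R b k))"

lemma bil_lsum: "bilinear h \<Longrightarrow> h (sum f S) z = (\<Sum>k\<in>S. h (f k) z)"
  by (induction S rule: infinite_finite_induct) (auto simp: bilinear_ladd bilinear_lzero)

lemma lorentzian_onb:
  fixes g :: "real^'n \<Rightarrow> real^'n \<Rightarrow> real"
  assumes "lorentzian g"
  shows "\<exists>e t. onb g e t"
proof -
  have bl: "bilinear g" using assms unfolding lorentzian_def by (elim conjE)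
  have "\<exists>(e::'n \<Rightarrow> real^'n) t. independent (range e) \<and> inj e \<and>
        (\<forall>i j. i \<noteq> j \<longrightarrow> g (e i) (e j) = 0) \<and>
        g (e t) (e t) = -1 \<and> (\<forall>i. i \<noteq> t \<longrightarrow> g (e i) (e i) = 1)"
    using assms unfolding lorentzian_def by (elim conjE)
  then obtain e :: "'n \<Rightarrow> real^'n" where "\<exists>t. independent (range e) \<and> inj e \<and>
        (\<forall>i j. i \<noteq> j \<longrightarrow> g (e i) (e j) = 0) \<and>
        g (e t) (e t) = -1 \<and> (\<forall>i. i \<noteq> t \<longrightarrow> g (e i) (e i) = 1)" ..
  then obtain t where H: "independent (range e) \<and> inj e \<and>
        (\<forall>i j. i \<noteq> j \<longrightarrow> g (e i) (e j) = 0) \<and>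
        g (e t) (e t) = -1 \<and> (\<forall>i. i \<noteq> t \<longrightarrow> g (e i) (e i) = 1)" ..
  from H have ind: "independent (range e)" by (elim conjE)
  from H have inj: "inj e" by (elim conjE)
  from H have orth: "\<forall>i j. i \<noteq> j \<longrightarrow> g (e i) (e j) = 0" by (elim conjE)
  from H have et: "g (e t) (e t) = -1" by (elim conjE)
  from H have ei: "\<forall>i. i \<noteq> t \<longrightarrow> g (e i) (e i) = 1" by (elim conjE)
  have sq: "g (e k) (e k) * g (e k) (e k) = 1" for k
    using et ei by (cases "k = t") auto
  have cardr: "card (range e) = dim (UNIV :: (real^'n) set)"
    using inj by (simp add: card_image dim_UNIV)
  have sp: "UNIV \<subseteq> span (range e)"
    using card_eq_dim[of "range e" UNIV] cardr ind by auto
  have exp: "y = (\<Sum>k\<in>UNIV. (g (e k) (e k) * g y (e k)) *\<^sub>R e k)" for y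
  proof -
    have "y \<in> span (range e)" using sp by auto
    then obtain u where u: "y = (\<Sum>v\<in>range e. u v *\<^sub>R v)"
      using span_finite[of "range e"] by auto
    have y2: "y = (\<Sum>k\<in>UNIV. u (e k) *\<^sub>R e k)"
      using u sum.reindex[OF inj, of "\<lambda>v. u v *\<^sub>R v"] by simp
    have "g y (e l) = u (e l) * g (e l) (e l)" for l
    proof -
      have "g y (e l) = (\<Sum>k\<in>UNIV. u (e k) * g (e k) (e l))"
        by (subst y2) (simp add: bil_lsum[OF bl] bilinear_lmul[OF bl])
      also have "\<dots> = (\<Sum>k\<in>{l}. u (e k) * g (e k) (e l))"
        by (rule sum.mono_neutral_right) (auto simp: orth)
      finally show ?thesis by simp
    qed
    then have uk: "u (e k) = g (e k) (e k) * g y (e k)" for k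
    proof -
      have "g (e k) (e k) * g y (e k) = u (e k) * (g (e k) (e k) * g (e k) (e k))"
        using \<open>g y (e k) = u (e k) * g (e k) (e k)\<close> by (simp add: mult_ac)
      then show ?thesis using sq[of k] by simp
    qed
    have eq: "(\<Sum>k\<in>UNIV. (g (e k) (e k) * g y (e k)) *\<^sub>R e k) = (\<Sum>k\<in>UNIV. u (e k) *\<^sub>R e k)"
      by (simp only: uk)
    show ?thesis by (rule trans[OF y2 eq[symmetric]])
  qed
  have "onb g e t" unfolding onb_def
  proof (intro conjI allI impI)
    show "g (e k) (e l) = 0" if "k \<noteq> l" for k l using orth that by blast
    show "g (e t) (e t) = -1" by (rule et)
    show "g (e k) (e k) = 1" if "k \<noteq> t" for k using ei that by blast
    show "y = (\<Sum>k\<in>UNIV. (g (e k) (e k) * g y (e k)) *\<^sub>R e k)" for y by (rule exp)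
  qed
  then show ?thesis by blast
qed

locale ctx =
  fixes g :: "real^'n \<Rightarrow> real^'n \<Rightarrow> real"
    and DR :: "real^'n \<Rightarrow> real^'n \<Rightarrow> real^'n \<Rightarrow> real^'n \<Rightarrow> real^'n \<Rightarrow> real"
  assumes bl: "bilinear g" and sy: "\<And>x y. g x y = g y x" and cd: "cov_deriv_alg_curv DR"
begin

lemma lin1: "linear (\<lambda>a. DR a b c d e)"
  using cd unfolding cov_deriv_alg_curv_def multilinear5_def
  by (elim conjE) ((drule spec)+, assumption)
lemma lin2: "linear (\<lambda>b. DR a b c d e)"
  using cd unfolding cov_deriv_alg_curv_def multilinear5_def
  by (elim conjE) ((drule spec)+, assumption)
lemma lin3: "linear (\<lambda>c. DR a b c d e)"
  using cd unfolding cov_deriv_alg_curv_def multilinear5_def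
  by (elim conjE) ((drule spec)+, assumption)
lemma lin4: "linear (\<lambda>d. DR a b c d e)"
  using cd unfolding cov_deriv_alg_curv_def multilinear5_def
  by (elim conjE) ((drule spec)+, assumption)
lemma lin5: "linear (\<lambda>e. DR a b c d e)"
  using cd unfolding cov_deriv_alg_curv_def multilinear5_def
  by (elim conjE) ((drule spec)+, assumption)

lemma anti: "DR a b c d e = - DR b a c d e"
  and pair: "DR a b c d e = DR c d a b e"
  and b1: "DR a b c d e + DR a c d b e + DR a d b c e = 0"
  and b2: "DR a b c d e + DR a b d e c + DR a b e c d = 0"
  using cd unfolding cov_deriv_alg_curv_def by blast+

lemma Ds1_0: "DR (a + a') b c d e = DR a b c d e + DR a' b c d e"
  using linear_add[OF lin1] by simp

lemma Ds1_1: "DR (a - a') b c d e = DR a b c d e - DR a' b c d e"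
  using linear_diff[OF lin1] by simp

lemma Ds1_2: "DR (- a) b c d e = - DR a b c d e"
  using linear_neg[OF lin1] by simp

lemma Ds1_3: "DR (r *\<^sub>R a) b c d e = r * DR a b c d e"
  using linear_scale[OF lin1] by simp

lemma Ds1_4: "DR 0 b c d e = 0"
  using linear_0[OF lin1] by simp

lemma Ds2_0: "DR a (b + b') c d e = DR a b c d e + DR a b' c d e"
  using linear_add[OF lin2] by simp

lemma Ds2_1: "DR a (b - b') c d e = DR a b c d e - DR a b' c d e"
  using linear_diff[OF lin2] by simp

lemma Ds2_2: "DR a (- b) c d e = - DR a b c d e"
  using linear_neg[OF lin2] by simp

lemma Ds2_3: "DR a (r *\<^sub>R b) c d e = r * DR a b c d e"
  using linear_scale[OF lin2] by simp

lemma Ds2_4: "DR a 0 c d e = 0"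
  using linear_0[OF lin2] by simp

lemma Ds3_0: "DR a b (c + c') d e = DR a b c d e + DR a b c' d e"
  using linear_add[OF lin3] by simp

lemma Ds3_1: "DR a b (c - c') d e = DR a b c d e - DR a b c' d e"
  using linear_diff[OF lin3] by simp

lemma Ds3_2: "DR a b (- c) d e = - DR a b c d e"
  using linear_neg[OF lin3] by simp

lemma Ds3_3: "DR a b (r *\<^sub>R c) d e = r * DR a b c d e"
  using linear_scale[OF lin3] by simp

lemma Ds3_4: "DR a b 0 d e = 0"
  using linear_0[OF lin3] by simp

lemma Ds4_0: "DR a b c (d + d') e = DR a b c d e + DR a b c d' e"
  using linear_add[OF lin4] by simp

lemma Ds4_1: "DR a b c (d - d') e = DR a b c d e - DR a b c d' e"
  using linear_diff[OF lin4] by simp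

lemma Ds4_2: "DR a b c (- d) e = - DR a b c d e"
  using linear_neg[OF lin4] by simp

lemma Ds4_3: "DR a b c (r *\<^sub>R d) e = r * DR a b c d e"
  using linear_scale[OF lin4] by simp

lemma Ds4_4: "DR a b c 0 e = 0"
  using linear_0[OF lin4] by simp

lemma Ds5_0: "DR a b c d (e + e') = DR a b c d e + DR a b c d e'"
  using linear_add[OF lin5] by simp

lemma Ds5_1: "DR a b c d (e - e') = DR a b c d e - DR a b c d e'"
  using linear_diff[OF lin5] by simp

lemma Ds5_2: "DR a b c d (- e) = - DR a b c d e"
  using linear_neg[OF lin5] by simp

lemma Ds5_3: "DR a b c d (r *\<^sub>R e) = r * DR a b c d e"
  using linear_scale[OF lin5] by simp

lemma Ds5_4: "DR a b c d 0 = 0"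
  using linear_0[OF lin5] by simp

lemmas D_simps = Ds1_0 Ds1_1 Ds1_2 Ds1_3 Ds1_4 Ds2_0 Ds2_1 Ds2_2 Ds2_3 Ds2_4 Ds3_0 Ds3_1 Ds3_2 Ds3_3 Ds3_4 Ds4_0 Ds4_1 Ds4_2 Ds4_3 Ds4_4 Ds5_0 Ds5_1 Ds5_2 Ds5_3 Ds5_4

lemma D_sums:
  "DR (sum f S) b c d e = (\<Sum>k\<in>S. DR (f k) b c d e)"
  "DR a (sum f S) c d e = (\<Sum>k\<in>S. DR a (f k) c d e)"
  "DR a b (sum f S) d e = (\<Sum>k\<in>S. DR a b (f k) d e)"
  "DR a b c (sum f S) e = (\<Sum>k\<in>S. DR a b c (f k) e)"
  "DR a b c d (sum f S) = (\<Sum>k\<in>S. DR a b c d (f k))"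
  using linear_sum[OF lin1] linear_sum[OF lin2] linear_sum[OF lin3] linear_sum[OF lin4] linear_sum[OF lin5]
  by (auto simp: o_def)

lemma gs_0: "g (x + y) z = g x z + g y z"
  using bilinear_ladd[OF bl] by simp

lemma gs_1: "g z (x + y) = g z x + g z y"
  using bilinear_radd[OF bl] by simp

lemma gs_2: "g (x - y) z = g x z - g y z"
  using bilinear_lsub[OF bl] by simp

lemma gs_3: "g z (x - y) = g z x - g z y"
  using bilinear_rsub[OF bl] by simp

lemma gs_4: "g (- x) z = - g x z"
  using bilinear_lneg[OF bl] by simp

lemma gs_5: "g z (- x) = - g z x"
  using bilinear_rneg[OF bl] by simp

lemma gs_6: "g (r *\<^sub>R x) z = r * g x z"
  using bilinear_lmul[OF bl] by simp

lemma gs_7: "g z (r *\<^sub>R x) = r * g z x"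
  using bilinear_rmul[OF bl] by simp

lemma gs_8: "g 0 z = 0"
  using bilinear_lzero[OF bl] by simp

lemma gs_9: "g z 0 = 0"
  using bilinear_rzero[OF bl] by simp

lemmas g_simps = gs_0 gs_1 gs_2 gs_3 gs_4 gs_5 gs_6 gs_7 gs_8 gs_9

lemma g_sums:
  "g (sum f S) z = (\<Sum>k\<in>S. g (f k) z)" "g z (sum f S) = (\<Sum>k\<in>S. g z (f k))"
proof -
  show "g (sum f S) z = (\<Sum>k\<in>S. g (f k) z)"
    by (induction S rule: infinite_finite_induct) (auto simp: g_simps)
  show "g z (sum f S) = (\<Sum>k\<in>S. g z (f k))"
    by (induction S rule: infinite_finite_induct) (auto simp: g_simps)
qed

lemma anti2: "DR a b c d e = - DR a b d c e"
  using pair[of a b c d e] anti[of c d a b e] pair[of d c a b e] by simp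

lemma D_aa: "DR a a c d e = 0" using anti[of a a c d e] by simp
lemma D_cc: "DR a b c c e = 0" using pair[of a b c c e] D_aa by simp

section \<open>Orthonormal bases\<close>

context
  fixes b :: "'n \<Rightarrow> real^'n" and t :: 'n
  assumes ob: "onb g b t"
begin

lemma ob_orth: "k \<noteq> l \<Longrightarrow> g (b k) (b l) = 0"
  using ob unfolding onb_def by (elim conjE) (erule allE, erule allE, erule mp)
lemma ob_t: "g (b t) (b t) = -1"
  using ob unfolding onb_def by (elim conjE)
lemma ob_s: "k \<noteq> t \<Longrightarrow> g (b k) (b k) = 1"
  using ob unfolding onb_def by (elim conjE) (erule allE, erule mp)
lemma ob_exp: "y = (\<Sum>k\<in>UNIV. (g (b k) (b k) * g y (b k)) *\<^sub>R b k)"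
  using ob unfolding onb_def by (elim conjE) (erule allE)

lemma ob_exp': "(\<Sum>k\<in>UNIV. (g (b k) (b k) * g y (b k)) *\<^sub>R b k) = y"
  using ob_exp[of y] by (rule sym)

lemma ob_sq: "g (b k) (b k) * g (b k) (b k) = 1"
  using ob_t ob_s by (cases "k = t") auto

lemma nondeg: assumes "\<And>k. g y (b k) = 0" shows "y = 0"
  using ob_exp'[of y] assms by simp

lemma g_expand: "g y z = (\<Sum>k\<in>UNIV. g (b k) (b k) * g y (b k) * g z (b k))"
proof -
  have "g y z = g y (\<Sum>k\<in>UNIV. (g (b k) (b k) * g z (b k)) *\<^sub>R b k)"
    by (simp only: ob_exp')
  also have "\<dots> = (\<Sum>k\<in>UNIV. g (b k) (b k) * g y (b k) * g z (b k))"
    by (simp add: g_sums g_simps mult_ac)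
  finally show ?thesis .
qed

definition Sz :: "real^'n \<Rightarrow> real^'n \<Rightarrow> real^'n" where
  "Sz x y = (\<Sum>k\<in>UNIV. (g (b k) (b k) * DR y x x (b k) x) *\<^sub>R b k)"

lemma Sz_linear: "linear (Sz x)"
proof (rule linearI)
  fix y z :: "real^'n" and r :: real
  show "Sz x (y + z) = Sz x y + Sz x z"
    unfolding Sz_def by (simp add: D_simps distrib_left scaleR_add_left sum.distrib)
  show "Sz x (r *\<^sub>R y) = r *\<^sub>R Sz x y"
    unfolding Sz_def by (simp add: D_simps scaleR_sum_right mult.left_commute)
qed

lemma Sz_g: "g (Sz x y) w = DR y x x w x"
proof -
  have "g (Sz x y) w = (\<Sum>k\<in>UNIV. g (b k) (b k) * DR y x x (b k) x * g (b k) w)"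
    unfolding Sz_def by (simp add: g_sums g_simps)
  also have "\<dots> = DR y x x (\<Sum>k\<in>UNIV. (g (b k) (b k) * g w (b k)) *\<^sub>R b k) x"
    by (simp add: D_sums D_simps sy[of "b k" w for k] mult_ac)
  also have "\<dots> = DR y x x w x" by (simp only: ob_exp')
  finally show ?thesis .
qed

lemma szabo_eq: "szabo g DR x = Sz x"
proof -
  have uniq: "F = Sz x" if "linear F \<and> (\<forall>y w. g (F y) w = DR y x x w x)" for F
  proof
    fix y
    have "g (F y - Sz x y) (b k) = 0" for k
      using that Sz_g by (simp add: g_simps)
    then show "F y = Sz x y" using nondeg by fastforce
  qed
  have ex: "linear (Sz x) \<and> (\<forall>y w. g (Sz x y) w = DR y x x w x)"
    using Sz_linear Sz_g by blast
  have "(THE f. linear f \<and> (\<forall>y w. g (f y) w = DR y x x w x)) = Sz x"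
    by (rule the_equality[where P="\<lambda>f. linear f \<and> (\<forall>y w. g (f y) w = DR y x x w x)", OF ex uniq])
  then show ?thesis unfolding szabo_def .
qed

lemma trace_onb:
  assumes "linear F"
  shows "trace (matrix F) = (\<Sum>k\<in>UNIV. g (b k) (b k) * g (F (b k)) (b k))"
proof -
  have Fa: "F (axis i 1) = (\<Sum>k\<in>UNIV. (g (b k) (b k) * g (axis i 1) (b k)) *\<^sub>R F (b k))" for i
  proof -
    have "F (axis i 1) = F (\<Sum>k\<in>UNIV. (g (b k) (b k) * g (axis i 1) (b k)) *\<^sub>R b k)"
      by (simp only: ob_exp')
    also have "\<dots> = (\<Sum>k\<in>UNIV. (g (b k) (b k) * g (axis i 1) (b k)) *\<^sub>R F (b k))"
      by (simp add: linear_sum[OF assms] linear_scale[OF assms] o_def)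
    finally show ?thesis .
  qed
  have "trace (matrix F) = (\<Sum>i\<in>UNIV. (F (axis i 1)) $ i)"
    by (simp add: trace_def matrix_def)
  also have "\<dots> = (\<Sum>i\<in>UNIV. \<Sum>k\<in>UNIV. g (b k) (b k) * (g (axis i 1) (b k) * (F (b k)) $ i))"
    by (subst Fa) (simp add: sum_component mult_ac)
  also have "\<dots> = (\<Sum>k\<in>UNIV. g (b k) (b k) * (\<Sum>i\<in>UNIV. g (axis i 1) (b k) * (F (b k)) $ i))"
    by (subst sum.swap) (simp add: sum_distrib_left)
  also have "\<dots> = (\<Sum>k\<in>UNIV. g (b k) (b k) * g (F (b k)) (b k))"
  proof -
    have hz: "(\<Sum>i\<in>UNIV. g (axis i 1) w * z $ i) = g z w" for z w
    proof -
      have "g z w = g (\<Sum>i\<in>UNIV. (z $ i) *\<^sub>R axis i 1) w"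
        by (simp only: basis_expansion[of z, unfolded scalar_mult_eq_scaleR])
      also have "\<dots> = (\<Sum>i\<in>UNIV. g (axis i 1) w * z $ i)"
        by (simp add: g_sums g_simps mult.commute)
      finally show ?thesis by (rule sym)
    qed
    show ?thesis by (simp only: hz)
  qed
  finally show ?thesis .
qed

definition q :: "real^'n \<Rightarrow> 'n \<Rightarrow> 'n \<Rightarrow> real" where
  "q x k l = DR (b k) x x (b l) x"

lemma q_sym: "q x k l = q x l k"
  unfolding q_def using pair[of "b k" x x "b l" x] anti[of x "b l" "b k" x x] anti2[of "b l" x "b k" x x]
  by simp

lemma f_formula:
  "trace (matrix (szabo g DR x \<circ> szabo g DR x)) =
     (\<Sum>k\<in>UNIV. \<Sum>l\<in>UNIV. g (b k) (b k) * g (b l) (b l) * (q x k l)\<^sup>2)"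
proof -
  have lin: "linear (Sz x \<circ> Sz x)" using Sz_linear linear_compose by blast
  have "trace (matrix (szabo g DR x \<circ> szabo g DR x)) = (\<Sum>k\<in>UNIV. g (b k) (b k) * DR (Sz x (b k)) x x (b k) x)"
    unfolding szabo_eq using trace_onb[OF lin] by (simp add: Sz_g)
  also have "\<dots> = (\<Sum>k\<in>UNIV. \<Sum>l\<in>UNIV. g (b k) (b k) * g (b l) (b l) * (q x k l)\<^sup>2)"
  proof (rule sum.cong[OF refl])
    fix k
    have "DR (Sz x (b k)) x x (b k) x = (\<Sum>l\<in>UNIV. g (b l) (b l) * q x k l * q x l k)"
      unfolding Sz_def q_def by (simp add: D_sums D_simps)
    also have "\<dots> = (\<Sum>l\<in>UNIV. g (b l) (b l) * (q x k l)\<^sup>2)"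
      by (rule sum.cong[OF refl]) (simp add: q_sym[of x _ k] power2_eq_square)
    finally show "g (b k) (b k) * DR (Sz x (b k)) x x (b k) x = (\<Sum>l\<in>UNIV. g (b k) (b k) * g (b l) (b l) * (q x k l)\<^sup>2)"
      by (simp add: sum_distrib_left mult_ac)
  qed
  finally show ?thesis .
qed

end
end

lemma cl_lemma:
  fixes h :: "real \<Rightarrow> real"
  assumes c: "continuous_on UNIV h" and le: "\<And>s. -1 < s \<Longrightarrow> s < 1 \<Longrightarrow> h s \<le> 0"
  shows "h 1 \<le> 0 \<and> h (-1) \<le> 0"
proof -
  have cl: "closed {s. h s \<le> 0}"
    by (rule closed_Collect_le[OF c continuous_on_const])
  have "{-1<..<1} \<subseteq> {s. h s \<le> 0}" using le by auto
  then have "closure {-1<..<(1::real)} \<subseteq> {s. h s \<le> 0}"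
    using cl by (rule closure_minimal)
  then have sub: "{-1..(1::real)} \<subseteq> {s. h s \<le> 0}" by simp
  show ?thesis using subsetD[OF sub, of 1] subsetD[OF sub, of "-1"] by simp
qed

lemma poly_lemma:
  fixes pa pb pc pd C :: real
  assumes H: "\<And>s. -1 < s \<Longrightarrow> s < 1 \<Longrightarrow> (pa + pb * s + pc * s^2 + pd * s^3)^2 \<le> C * (1 - s^2)^3"
  shows "pa = 0"
proof -
  have c1: "continuous_on UNIV (\<lambda>s::real. (pa + pb * s + pc * s^2 + pd * s^3)^2 - C * (1 - s^2)^3)"
    by (intro continuous_intros)
  have "(\<lambda>s::real. (pa + pb * s + pc * s^2 + pd * s^3)^2 - C * (1 - s^2)^3) 1 \<le> 0 \<and>
        (\<lambda>s::real. (pa + pb * s + pc * s^2 + pd * s^3)^2 - C * (1 - s^2)^3) (-1) \<le> 0"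
    by (rule cl_lemma[OF c1]) (use H in auto)
  then have "(pa + pb + pc + pd)^2 \<le> 0" "(pa - pb + pc - pd)^2 \<le> 0" by simp_all
  then have e1: "pa + pb + pc + pd = 0" and e2: "pa - pb + pc - pd = 0"
    by simp_all
  have pc: "pc = - pa" and pd: "pd = - pb" using e1 e2 by linarith+
  have H2: "(pa + pb * s)^2 - C * (1 - s^2) \<le> 0" if "-1 < s" "s < 1" for s
  proof -
    have "s^2 < 1" using that by (simp add: abs_square_less_1 abs_less_iff)
    then have pos: "0 < (1 - s^2)^2" by simp
    have "(pa + pb * s + pc * s^2 + pd * s^3) = (1 - s^2) * (pa + pb * s)"
      by (simp add: pc pd algebra_simps power2_eq_square power3_eq_cube)
    then have "(1 - s^2)^2 * (pa + pb * s)^2 \<le> (1 - s^2)^2 * (C * (1 - s^2))"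
      using H[OF that] by (simp add: power_mult_distrib power3_eq_cube power2_eq_square mult_ac)
    then have "(pa + pb * s)^2 \<le> C * (1 - s^2)"
      using pos by (simp add: mult_le_cancel_left_pos)
    then show ?thesis by simp
  qed
  have c2: "continuous_on UNIV (\<lambda>s::real. (pa + pb * s)^2 - C * (1 - s^2))"
    by (intro continuous_intros)
  have "(\<lambda>s::real. (pa + pb * s)^2 - C * (1 - s^2)) 1 \<le> 0 \<and> (\<lambda>s::real. (pa + pb * s)^2 - C * (1 - s^2)) (-1) \<le> 0"
    by (rule cl_lemma[OF c2]) (use H2 in auto)
  then have "(pa + pb)^2 \<le> 0" "(pa - pb)^2 \<le> 0" by simp_all
  then have "pa + pb = 0" "pa - pb = 0" by simp_all
  then show ?thesis by linarith
qed

context ctx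
begin

definition Ftr :: "real^'n \<Rightarrow> real" where
  "Ftr x = trace (matrix (szabo g DR x \<circ> szabo g DR x))"

lemma sum_split2:
  fixes f :: "'n \<Rightarrow> real"
  assumes "t \<noteq> i"
  shows "sum f UNIV = f t + f i + sum f (UNIV - {t, i})"
proof -
  have "sum f UNIV = f t + sum f (UNIV - {t})" by (simp add: sum.remove)
  moreover have "sum f (UNIV - {t}) = f i + sum f (UNIV - {t} - {i})"
    using assms by (intro sum.remove) auto
  moreover have "UNIV - {t} - {i} = UNIV - {t, i}" by auto
  ultimately show ?thesis by simp
qed

lemma Qsym: "DR a x x c y = DR c x x a y"
  using pair[of a x x c y] anti[of x c a x y] anti2[of c x a x y] by simp

lemma lin_first: "DR (u + s *\<^sub>R v) y z w p = DR u y z w p + s * DR v y z w p"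
  by (simp add: D_simps)

context
  fixes b :: "'n \<Rightarrow> real^'n" and t :: 'n
  assumes ob: "onb g b t"
begin

lemma Ftr_formula: "Ftr x = (\<Sum>k\<in>UNIV. \<Sum>l\<in>UNIV. g (b k) (b k) * g (b l) (b l) * (q b x k l)\<^sup>2)"
  unfolding Ftr_def by (rule f_formula[OF ob])

lemma Ftr_hom: "Ftr (r *\<^sub>R x) = r^6 * Ftr x"
proof -
  have "q b (r *\<^sub>R x) k l = r^3 * q b x k l" for k l
    unfolding q_def[OF ob] by (simp add: D_simps power3_eq_cube mult_ac)
  then show ?thesis
    unfolding Ftr_formula
    by (simp add: sum_distrib_left power_mult_distrib mult_ac flip: power_mult)
qed

lemma Ftr_timelike:
  assumes cm: "\<And>x. g x x = -1 \<Longrightarrow> Ftr x = cm" and neg: "g x x < 0"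
  shows "Ftr x = cm * (- g x x)^3"
proof -
  define r where "r = sqrt (- g x x)"
  have r0: "r > 0" and r2: "r * r = - g x x" using neg by (auto simp: r_def)
  define u where "u = (1 / r) *\<^sub>R x"
  have xu: "x = r *\<^sub>R u" using r0 by (simp add: u_def)
  have "g u u = (1/r) * (1/r) * g x x" by (simp add: u_def g_simps)
  also have "\<dots> = -1" using r0 r2 neg by (simp add: field_simps)
  finally have "Ftr u = cm" by (rule cm)
  then have "Ftr x = r^6 * cm" using Ftr_hom[of r u] xu by simp
  also have "r^6 = (- g x x)^3" using r2 by (simp add: power_mult_distrib flip: r2)
  finally show ?thesis by (simp only: mult.commute)
qed

lemma F_ge:
  assumes it: "i \<noteq> t" and jt: "j \<noteq> t" and ij: "i \<noteq> j" and s1: "s * s < 1"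
  shows "(q b (b t + s *\<^sub>R b i) j j)^2 \<le> Ftr (b t + s *\<^sub>R b i)"
proof -
  define x where "x = b t + s *\<^sub>R b i"
  let ?e = "\<lambda>k. g (b k) (b k)"
  let ?q = "q b x"
  let ?U = "UNIV - {t, i}"
  have eU: "?e l = 1" if "l \<in> ?U" for l using that ob_s[OF ob] by auto
  have qt: "?q t l = - s * ?q i l" for l
  proof -
    have "DR x x x (b l) x = 0" by (rule D_aa)
    moreover have "DR x x x (b l) x = DR (b t) x x (b l) x + s * DR (b i) x x (b l) x"
      using lin_first[of "b t" s "b i" x x "b l" x] by (simp add: x_def[symmetric])
    ultimately show ?thesis unfolding q_def[OF ob] by simp
  qed
  define A where "A k = (\<Sum>l\<in>UNIV. ?e l * (?q k l)^2)" for k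
  have A_eq: "A k = (1 - s * s) * (?q k i)^2 + (\<Sum>l\<in>?U. (?q k l)^2)" for k
  proof -
    have "A k = ?e t * (?q k t)^2 + ?e i * (?q k i)^2 + (\<Sum>l\<in>?U. ?e l * (?q k l)^2)"
      unfolding A_def by (rule sum_split2[OF it[symmetric]])
    also have "(\<Sum>l\<in>?U. ?e l * (?q k l)^2) = (\<Sum>l\<in>?U. (?q k l)^2)"
      by (rule sum.cong) (auto simp: eU)
    also have "?q k t = - s * ?q k i"
      using qt[of k] q_sym[OF ob, of x k t] q_sym[OF ob, of x i k] by simp
    finally show ?thesis using ob_t[OF ob] ob_s[OF ob, OF it]
      by (simp add: power2_eq_square algebra_simps)
  qed
  have sU: "0 \<le> (\<Sum>l\<in>?U. (?q k l)^2)" for k by (rule sum_nonneg) simp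
  have s0: "0 \<le> 1 - s * s" using s1 by simp
  have A_nn: "0 \<le> A k" for k
    unfolding A_eq using sU[of k] s0 by (simp add: mult_nonneg_nonneg)
  have At: "A t = s * s * A i"
  proof -
    have "(\<Sum>l\<in>?U. (?q t l)^2) = (\<Sum>l\<in>?U. s * s * (?q i l)^2)"
      by (rule sum.cong) (auto simp: qt power2_eq_square algebra_simps)
    also have "\<dots> = s * s * (\<Sum>l\<in>?U. (?q i l)^2)" by (simp add: sum_distrib_left)
    finally show ?thesis unfolding A_eq using qt[of i]
      by (simp add: power2_eq_square algebra_simps)
  qed
  have F_eq: "Ftr x = (\<Sum>k\<in>UNIV. ?e k * A k)"
    unfolding Ftr_formula A_def by (simp add: sum_distrib_left mult_ac)
  also have "\<dots> = ?e t * A t + ?e i * A i + (\<Sum>k\<in>?U. ?e k * A k)"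
    by (rule sum_split2[OF it[symmetric]])
  also have "(\<Sum>k\<in>?U. ?e k * A k) = (\<Sum>k\<in>?U. A k)"
    by (rule sum.cong) (auto simp: eU)
  finally have F2: "Ftr x = (1 - s * s) * A i + (\<Sum>k\<in>?U. A k)"
    using ob_t[OF ob] ob_s[OF ob, OF it] At by (simp add: algebra_simps)
  have jU: "j \<in> ?U" using jt ij by auto
  have "(?q j j)^2 \<le> (\<Sum>l\<in>?U. (?q j l)^2)"
    by (rule member_le_sum[OF jU]) auto
  also have "\<dots> \<le> A j" unfolding A_eq using s0 by (simp add: mult_nonneg_nonneg)
  also have "\<dots> \<le> (\<Sum>k\<in>?U. A k)" by (rule member_le_sum[OF jU]) (auto simp: A_nn)
  also have "\<dots> \<le> Ftr x" unfolding F2 using A_nn[of i] s0 by (simp add: mult_nonneg_nonneg)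
  finally show ?thesis unfolding x_def .
qed

lemma L_lemma:
  assumes cm: "\<And>x. g x x = -1 \<Longrightarrow> Ftr x = cm"
    and it: "i \<noteq> t" and jt: "j \<noteq> t" and ij: "i \<noteq> j"
  shows "DR (b j) (b t) (b t) (b j) (b t) = 0"
proof -
  let ?p0 = "DR (b j) (b t) (b t) (b j) (b t)"
  let ?p1 = "DR (b j) (b i) (b t) (b j) (b t) + DR (b j) (b t) (b i) (b j) (b t) + DR (b j) (b t) (b t) (b j) (b i)"
  let ?p2 = "DR (b j) (b i) (b i) (b j) (b t) + DR (b j) (b i) (b t) (b j) (b i) + DR (b j) (b t) (b i) (b j) (b i)"
  let ?p3 = "DR (b j) (b i) (b i) (b j) (b i)"
  show ?thesis
  proof (rule poly_lemma[where pb = ?p1 and pc = ?p2 and pd = ?p3 and C = cm])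
    fix s :: real assume s: "-1 < s" "s < 1"
    then have "s^2 < 1" by (simp add: abs_square_less_1 abs_less_iff)
    then have s1: "s * s < 1" by (simp add: power2_eq_square)
    define x where "x = b t + s *\<^sub>R b i"
    have gx: "g x x = s * s - 1"
      unfolding x_def using ob_t[OF ob] ob_s[OF ob, OF it] ob_orth[OF ob, OF it] ob_orth[OF ob, OF it[symmetric]]
      by (simp add: g_simps algebra_simps)
    have Fx: "Ftr x = cm * (1 - s^2)^3"
      using Ftr_timelike[OF cm, of x] gx s1 by (simp add: power2_eq_square)
    have qx: "q b x j j = ?p0 + ?p1 * s + ?p2 * s^2 + ?p3 * s^3"
      unfolding q_def[OF ob] x_def
      by (simp add: D_simps algebra_simps power2_eq_square power3_eq_cube)
    have "(q b x j j)^2 \<le> Ftr x" unfolding x_def by (rule F_ge[OF it jt ij s1])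
    then show "(?p0 + ?p1 * s + ?p2 * s^2 + ?p3 * s^3)^2 \<le> cm * (1 - s^2)^3"
      using qx Fx by simp
  qed
qed

end

end

context ctx
begin

lemma pol_from:
  assumes Z: "\<And>x y z. DR y x x z x = 0"
  shows "DR y a b z c + DR y b a z c + DR y a c z b + DR y c a z b + DR y b c z a + DR y c b z a = 0"
proof -
  have "DR y (a+b+c) (a+b+c) z (a+b+c) - DR y (a+b) (a+b) z (a+b) - DR y (a+c) (a+c) z (a+c)
      - DR y (b+c) (b+c) z (b+c) + DR y a a z a + DR y b b z b + DR y c c z c
      = DR y a b z c + DR y b a z c + DR y a c z b + DR y c a z b + DR y b c z a + DR y c b z a"
    by (simp add: D_simps algebra_simps)
  then show ?thesis using Z by simp
qed

lemma all_zero: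
  assumes Z: "\<And>x y z. DR y x x z x = 0"
  shows "DR a b c d e = 0"
proof -
  note pol = pol_from[OF Z]
  have H0: "(DR a d b e c + DR a d e c b + DR a d c b e) = 0" using b2[of a d b e c] by linarith
  have H1: "(DR a d b c e + DR a d c e b + DR a d e b c) = 0" using b2[of a d b c e] by linarith
  have H2: "(DR a b c e d + DR a c b e d + DR a b d e c + DR a d b e c + DR a c d e b + DR a d c e b) = 0" using pol[of a b c e d] by linarith
  have H3: "(DR a b c d e + DR a c d b e + DR a d b c e) = 0" using b1[of a b c d e] by linarith
  have H4: "(DR a b c e d + DR a b e d c + DR a b d c e) = 0" using b2[of a b c e d] by linarith
  have H5: "(DR a c b e d + DR a c e d b + DR a c d b e) = 0" using b2[of a c b e d] by linarith
  have H6: "(DR a c d e b + DR a d e c b + DR a e c d b) = 0" using b1[of a c d e b] by linarith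
  have H7: "(DR a b c d e + DR a c b d e + DR a b e d c + DR a e b d c + DR a c e d b + DR a e c d b) = 0" using pol[of a b c d e] by linarith
  have H8: "(DR a b d e c + DR a d e b c + DR a e b d c) = 0" using b1[of a b d e c] by linarith
  have H9: "(DR a e b d c - DR b d a e c) = 0" using pair[of a e b d c] by linarith
  have H10: "(DR b a c d e + DR b c d a e + DR b d a c e) = 0" using b1[of b a c d e] by linarith
  have H11: "(DR a b c d e + DR b a c d e) = 0" using anti[of a b c d e] by linarith
  have H12: "(DR b c e a d - DR e a b c d) = 0" using pair[of b c e a d] by linarith
  have H13: "(DR a e b c d + DR e a b c d) = 0" using anti[of a e b c d] by linarith
  have H14: "(DR a c b d e - DR b d a c e) = 0" using pair[of a c b d e] by linarith
  have H15: "(DR b c a e d + DR c b a e d) = 0" using anti[of b c a e d] by linarith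
  have H16: "(DR a e c b d - DR c b a e d) = 0" using pair[of a e c b d] by linarith
  have H17: "(DR a b e c d + DR a e c b d + DR a c b e d) = 0" using b1[of a b e c d] by linarith
  have H18: "(DR a d b c e - DR b c a d e) = 0" using pair[of a d b c e] by linarith
  have H19: "(DR b c d a e - DR d a b c e) = 0" using pair[of b c d a e] by linarith
  have H20: "(DR a d b c e + DR d a b c e) = 0" using anti[of a d b c e] by linarith
  have H21: "(DR a b c e d + DR b a c e d) = 0" using anti[of a b c e d] by linarith
  have H22: "(DR b a c e d + DR b c e a d + DR b e a c d) = 0" using b1[of b a c e d] by linarith
  have H23: "(DR a c b e d - DR b e a c d) = 0" using pair[of a c b e d] by linarith
  have H24: "(DR b c a e d + DR b c e d a + DR b c d a e) = 0" using b2[of b c a e d] by linarith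
  have H25: "(DR a b c d e + DR a b d e c + DR a b e c d) = 0" using b2[of a b c d e] by linarith
  have H26: "(DR a b e d c + DR b a e d c) = 0" using anti[of a b e d c] by linarith
  have H27: "(DR a c b d e + DR a c d e b + DR a c e b d) = 0" using b2[of a c b d e] by linarith
  have H28: "(DR b d a e c + DR b d e c a + DR b d c a e) = 0" using b2[of b d a e c] by linarith
  have H29: "(DR a b d c e + DR b a d c e) = 0" using anti[of a b d c e] by linarith
  have H30: "(DR b a d c e + DR b d c a e + DR b c a d e) = 0" using b1[of b a d c e] by linarith
  have H31: "(DR b c d e a + DR b d e c a + DR b e c d a) = 0" using b1[of b c d e a] by linarith
  have H32: "(DR b a c d e + DR b c a d e + DR b a e d c + DR b e a d c + DR b c e d a + DR b e c d a) = 0" using pol[of b a c d e] by linarith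
  have H33: "(DR a b c e d + DR a c e b d + DR a e b c d) = 0" using b1[of a b c e d] by linarith
  have H34: "(DR b c a d e + DR b c d e a + DR b c e a d) = 0" using b2[of b c a d e] by linarith
  have H35: "(DR b c a d e + DR c b a d e) = 0" using anti[of b c a d e] by linarith
  have H36: "(DR a d c b e - DR c b a d e) = 0" using pair[of a d c b e] by linarith
  have H37: "(DR a d b e c - DR b e a d c) = 0" using pair[of a d b e c] by linarith
  have H38: "(DR a e b c d - DR b c a e d) = 0" using pair[of a e b c d] by linarith
  have H39: "(DR b d a c e + DR b d c e a + DR b d e a c) = 0" using b2[of b d a c e] by linarith
  have H40: "(DR b a c e d + DR b c a e d + DR b a d e c + DR b d a e c + DR b c d e a + DR b d c e a) = 0" using pol[of b a c e d] by linarith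
  have H41: "(DR a b d e c + DR b a d e c) = 0" using anti[of a b d e c] by linarith
  have H42: "(DR b a d e c + DR b d e a c + DR b e a d c) = 0" using b1[of b a d e c] by linarith
  have H43: "(DR a b d c e + DR a d c b e + DR a c b d e) = 0" using b1[of a b d c e] by linarith
  have "DR a b c d e = (1/6) * (DR a d b e c + DR a d e c b + DR a d c b e) + (-1/12) * (DR a d b c e + DR a d c e b + DR a d e b c) + (1/12) * (DR a b c e d + DR a c b e d + DR a b d e c + DR a d b e c + DR a c d e b + DR a d c e b) + (1/6) * (DR a b c d e + DR a c d b e + DR a d b c e) + (-1/3) * (DR a b c e d + DR a b e d c + DR a b d c e) + (-1/6) * (DR a c b e d + DR a c e d b + DR a c d b e) + (-1/6) * (DR a c d e b + DR a d e c b + DR a e c d b) + (1/6) * (DR a b c d e + DR a c b d e + DR a b e d c + DR a e b d c + DR a c e d b + DR a e c d b) + (1/12) * (DR a b d e c + DR a d e b c + DR a e b d c) + (-1/4) * (DR a e b d c - DR b d a e c) + (-5/6) * (DR b a c d e + DR b c d a e + DR b d a c e) + (1) * (DR a b c d e + DR b a c d e) + (1/3) * (DR b c e a d - DR e a b c d) + (1/3) * (DR a e b c d + DR e a b c d) + (-3/4) * (DR a c b d e - DR b d a c e) + (-1/3) * (DR b c a e d + DR c b a e d) + (-1/3) * (DR a e c b d - DR c b a e d) + (1/3) * (DR a b e c d + DR a e c b d + DR a c b e d) + (-3/4) * (DR a d b c e - DR b c a d e) + (2/3) * (DR b c d a e - DR d a b c e) + (2/3) * (DR a d b c e + DR d a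 b c e) + (1/3) * (DR a b c e d + DR b a c e d) + (-1/4) * (DR b a c e d + DR b c e a d + DR b e a c d) + (-1/4) * (DR a c b e d - DR b e a c d) + (1/6) * (DR b c a e d + DR b c e d a + DR b c d a e) + (-1/3) * (DR a b c d e + DR a b d e c + DR a b e c d) + (1/6) * (DR a b e d c + DR b a e d c) + (1/12) * (DR a c b d e + DR a c d e b + DR a c e b d) + (-1/6) * (DR b d a e c + DR b d e c a + DR b d c a e) + (-1/6) * (DR a b d c e + DR b a d c e) + (1/6) * (DR b a d c e + DR b d c a e + DR b c a d e) + (1/6) * (DR b c d e a + DR b d e c a + DR b e c d a) + (-1/6) * (DR b a c d e + DR b c a d e + DR b a e d c + DR b e a d c + DR b c e d a + DR b e c d a) + (-1/12) * (DR a b c e d + DR a c e b d + DR a e b c d) + (-1/12) * (DR b c a d e + DR b c d e a + DR b c e a d) + (-2/3) * (DR b c a d e + DR c b a d e) + (-2/3) * (DR a d c b e - DR c b a d e) + (-1/4) * (DR a d b e c - DR b e a d c) + (-1/4) * (DR a e b c d - DR b c a e d) + (1/12) * (DR b d a c e + DR b d c e a + DR b d e a c) + (-1/12) * (DR b a c e d + DR b c a e d + DR b a d e c + DR b d a e c + DR b c d e a + DR b d c e a) + (1/6) * (DR a b d e c + DR b a d e c) + (-1/12) * (DR b a d e c + DR b d e a c + DR b e a d c) + (1/2) * (DR a b d c e + DR a d c b e + DR a c b d e)"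
    by (simp add: algebra_simps)
  also have "\<dots> = 0" by (simp only: H0 H1 H2 H3 H4 H5 H6 H7 H8 H9 H10 H11 H12 H13 H14 H15 H16 H17 H18 H19 H20 H21 H22 H23 H24 H25 H26 H27 H28 H29 H30 H31 H32 H33 H34 H35 H36 H37 H38 H39 H40 H41 H42 H43)
  finally show ?thesis .
qed

definition hh :: "real^'n \<Rightarrow> real^'n \<Rightarrow> real^'n" where
  "hh d y = y - (2 * g y d / g d d) *\<^sub>R d"

context
  fixes d :: "real^'n"
  assumes dd: "g d d \<noteq> 0"
begin

lemma hh_d: "g (hh d y) d = - g y d"
  unfolding hh_def using dd by (simp add: g_simps field_simps)

lemma hh_iso: "g (hh d y) (hh d z) = g y z"
proof -
  have "g (hh d y) (hh d z) = g y z - 2 * g z d / g d d * g y d - 2 * g y d / g d d * g d z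
        + (2 * g y d / g d d) * (2 * g z d / g d d) * g d d"
    unfolding hh_def by (simp add: g_simps algebra_simps)
  also have "\<dots> = g y z" using dd by (simp add: sy[of d z] field_simps)
  finally show ?thesis .
qed

lemma hh_inv: "hh d (hh d y) = y"
proof -
  have "hh d (hh d y) = hh d y - (2 * g (hh d y) d / g d d) *\<^sub>R d" by (rule hh_def)
  also have "\<dots> = y" unfolding hh_d by (simp add: hh_def)
  finally show ?thesis .
qed

lemma hh_lin: "linear (hh d)"
proof (rule linearI)
  fix y z :: "real^'n" and r :: real
  show "hh d (y + z) = hh d y + hh d z"
    unfolding hh_def by (simp add: g_simps add_divide_distrib distrib_left scaleR_add_left algebra_simps)
  show "hh d (r *\<^sub>R y) = r *\<^sub>R hh d y"
    unfolding hh_def by (simp add: g_simps scaleR_diff_right)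
qed

lemma hh_fix: "g z d = 0 \<Longrightarrow> hh d z = z"
  unfolding hh_def by simp

lemma hh_onb:
  assumes ob: "onb g b t"
  shows "onb g (\<lambda>k. hh d (b k)) t"
  unfolding onb_def
proof (intro conjI allI impI)
  show "g (hh d (b k)) (hh d (b l)) = 0" if "k \<noteq> l" for k l
    using ob_orth[OF ob that] by (simp add: hh_iso)
  show "g (hh d (b t)) (hh d (b t)) = -1" using ob_t[OF ob] by (simp add: hh_iso)
  show "g (hh d (b k)) (hh d (b k)) = 1" if "k \<noteq> t" for k using ob_s[OF ob that] by (simp add: hh_iso)
  show "y = (\<Sum>k\<in>UNIV. (g (hh d (b k)) (hh d (b k)) * g y (hh d (b k))) *\<^sub>R hh d (b k))" for y
  proof -
    have "y = hh d (hh d y)" by (simp add: hh_inv)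
    also have "\<dots> = hh d (\<Sum>k\<in>UNIV. (g (b k) (b k) * g (hh d y) (b k)) *\<^sub>R b k)"
      by (simp only: ob_exp'[OF ob])
    also have "\<dots> = (\<Sum>k\<in>UNIV. (g (b k) (b k) * g (hh d y) (b k)) *\<^sub>R hh d (b k))"
      by (simp add: linear_sum[OF hh_lin] linear_scale[OF hh_lin] o_def)
    also have "\<dots> = (\<Sum>k\<in>UNIV. (g (hh d (b k)) (hh d (b k)) * g y (hh d (b k))) *\<^sub>R hh d (b k))"
    proof (rule sum.cong[OF refl])
      fix k
      have "g (hh d y) (b k) = g (hh d (hh d y)) (hh d (b k))" by (simp only: hh_iso)
      then have "g (hh d y) (b k) = g y (hh d (b k))" by (simp only: hh_inv)
      then show "(g (b k) (b k) * g (hh d y) (b k)) *\<^sub>R hh d (b k) = (g (hh d (b k)) (hh d (b k)) * g y (hh d (b k))) *\<^sub>R hh d (b k)"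
        by (simp add: hh_iso)
    qed
    finally show ?thesis .
  qed
qed

end

lemma hh_swap:
  assumes "g p p = g w w" "g (p - w) (p - w) \<noteq> 0"
  shows "hh (p - w) p = w"
proof -
  have "g (p - w) (p - w) = 2 * g p (p - w)"
    using assms(1) by (simp add: g_simps sy[of w p])
  then have "2 * g p (p - w) / g (p - w) (p - w) = 1" using assms(2) by simp
  then show ?thesis unfolding hh_def by simp
qed

lemma exists_third:
  assumes "CARD('n) \<ge> 3"
  shows "\<exists>i::'n. i \<noteq> t \<and> i \<noteq> j"
proof (rule ccontr)
  assume "\<not> ?thesis"
  then have "(UNIV::'n set) \<subseteq> {t, j}" by auto
  then have "CARD('n) \<le> card {t, j}" by (intro card_mono) auto
  also have "\<dots> \<le> 2" by (rule card_insert_le_m1) auto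
  finally show False using assms by simp
qed

context
  fixes cm :: real
  assumes cm: "\<And>x. g x x = -1 \<Longrightarrow> Ftr x = cm" and c3: "CARD('n) \<ge> 3"
begin

lemma diag0:
  assumes ob: "onb g b t" and jt: "j \<noteq> t"
  shows "DR (b j) (b t) (b t) (b j) (b t) = 0"
proof -
  obtain i where "i \<noteq> t" "i \<noteq> j" using exists_third[OF c3] by blast
  then show ?thesis using L_lemma[OF ob cm] jt by blast
qed

lemma offdiag0:
  assumes ob: "onb g b t" and jt: "j \<noteq> t" and kt: "k \<noteq> t" and jk: "j \<noteq> k"
  shows "DR (b j) (b t) (b t) (b k) (b t) = 0"
proof -
  define v where "v = (3/5) *\<^sub>R b j + (4/5) *\<^sub>R b k"
  define d where "d = b j - v"
  have o1: "g (b j) (b k) = 0" "g (b k) (b j) = 0" "g (b t) (b j) = 0" "g (b t) (b k) = 0"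
    using ob_orth[OF ob] jt kt jk by auto
  have s1: "g (b j) (b j) = 1" "g (b k) (b k) = 1" using ob_s[OF ob] jt kt by auto
  have gv: "g (b j) (b j) = g v v" unfolding v_def using o1 s1 by (simp add: g_simps)
  have gd: "g d d \<noteq> 0" unfolding d_def v_def using o1 s1 by (simp add: g_simps)
  have ob2: "onb g (\<lambda>l. hh d (b l)) t" by (rule hh_onb[OF gd ob])
  have hj: "hh d (b j) = v" unfolding d_def using hh_swap[OF gv] gd d_def by simp
  have ht: "hh d (b t) = b t" unfolding d_def v_def
    by (rule hh_fix) (use gd o1 in \<open>simp_all add: d_def v_def g_simps\<close>)
  have "DR (hh d (b j)) (hh d (b t)) (hh d (b t)) (hh d (b j)) (hh d (b t)) = 0"
    by (rule diag0[OF ob2 jt])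
  then have "DR v (b t) (b t) v (b t) = 0" by (simp only: hj ht)
  moreover have "DR v (b t) (b t) v (b t) = 9/25 * DR (b j) (b t) (b t) (b j) (b t)
      + 12/25 * DR (b j) (b t) (b t) (b k) (b t) + 12/25 * DR (b k) (b t) (b t) (b j) (b t)
      + 16/25 * DR (b k) (b t) (b t) (b k) (b t)"
    unfolding v_def by (simp add: D_simps algebra_simps)
  moreover have "DR (b j) (b t) (b t) (b j) (b t) = 0" by (rule diag0[OF ob jt])
  moreover have "DR (b k) (b t) (b t) (b k) (b t) = 0" by (rule diag0[OF ob kt])
  moreover have "DR (b k) (b t) (b t) (b j) (b t) = DR (b j) (b t) (b t) (b k) (b t)" by (rule Qsym)
  ultimately show ?thesis by linarith
qed

lemma Sb_zero:
  assumes ob: "onb g b t"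
  shows "DR y (b t) (b t) z (b t) = 0"
proof -
  have Z: "DR (b k) (b t) (b t) (b l) (b t) = 0" for k l
  proof (cases "k = t")
    case True then show ?thesis by (simp add: D_aa)
  next
    case False
    show ?thesis
    proof (cases "l = t")
      case True then show ?thesis by (simp add: D_cc)
    next
      case lF: False
      show ?thesis
      proof (cases "k = l")
        case True then show ?thesis using diag0[OF ob False] by simp
      next
        case kl: False then show ?thesis using offdiag0[OF ob False lF] by simp
      qed
    qed
  qed
  have "DR y (b t) (b t) z (b t) = DR (\<Sum>k\<in>UNIV. (g (b k) (b k) * g y (b k)) *\<^sub>R b k) (b t) (b t)
          (\<Sum>l\<in>UNIV. (g (b l) (b l) * g z (b l)) *\<^sub>R b l) (b t)"
    by (simp only: ob_exp'[OF ob])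
  also have "\<dots> = 0" by (simp add: D_sums D_simps Z)
  finally show ?thesis .
qed

lemma timelike_zero:
  assumes ob: "onb g e t" and neg: "g x x < 0"
  shows "DR y x x z x = 0"
proof -
  have unit: "DR y u u z u = 0" if gu: "g u u = -1" and ne: "g (e t) u \<noteq> -1" for u
  proof -
    define d where "d = e t - u"
    have geu: "g (e t) (e t) = g u u" using ob_t[OF ob] gu by simp
    have gd: "g d d \<noteq> 0" unfolding d_def using ob_t[OF ob] gu ne sy[of u "e t"]
      by (simp add: g_simps)
    have ob2: "onb g (\<lambda>l. hh d (b l)) t" if "onb g b t" for b by (rule hh_onb[OF gd that])
    have ht: "hh d (e t) = u" unfolding d_def using hh_swap[OF geu] gd d_def by simp
    have "DR y (hh d (e t)) (hh d (e t)) z (hh d (e t)) = 0" by (rule Sb_zero[OF ob2[OF ob]])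
    then show ?thesis by (simp only: ht)
  qed
  define r where "r = sqrt (- g x x)"
  have r0: "r > 0" and r2: "r * r = - g x x" using neg by (auto simp: r_def)
  define u where "u = (1 / r) *\<^sub>R x"
  have xu: "x = r *\<^sub>R u" using r0 by (simp add: u_def)
  have "g u u = (1/r) * (1/r) * g x x" by (simp add: u_def g_simps)
  also have "\<dots> = -1" using r0 r2 neg by (simp add: field_simps)
  finally have gu: "g u u = -1" .
  have "DR y u u z u = 0"
  proof (cases "g (e t) u = -1")
    case False then show ?thesis by (rule unit[OF gu])
  next
    case True
    have "DR y (-u) (-u) z (-u) = 0" by (rule unit) (use gu True in \<open>simp_all add: g_simps\<close>)
    then show ?thesis by (simp add: D_simps)
  qed
  then show ?thesis unfolding xu by (simp add: D_simps)
qed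

lemma neg_big:
  fixes a c lam :: real
  assumes "lam \<ge> \<bar>a\<bar> + 2 * \<bar>c\<bar> + 1"
  shows "a + 2 * lam * c - lam * lam < 0"
proof -
  have l0: "lam \<ge> 1" using assms by linarith
  have l1: "lam * lam \<ge> lam * (\<bar>a\<bar> + 2 * \<bar>c\<bar> + 1)" using assms l0 by (intro mult_left_mono) auto
  have l2: "lam * \<bar>a\<bar> \<ge> \<bar>a\<bar>" using l0 mult_right_mono[of 1 lam "\<bar>a\<bar>"] by simp
  have l3: "lam * \<bar>c\<bar> \<ge> lam * c" using l0 by (intro mult_left_mono) auto
  have "lam * (\<bar>a\<bar> + 2 * \<bar>c\<bar> + 1) = lam * \<bar>a\<bar> + 2 * (lam * \<bar>c\<bar>) + lam" by (simp add: algebra_simps)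
  then show ?thesis using l1 l2 l3 l0 by linarith
qed

lemma all_x_zero:
  assumes ob: "onb g e t"
  shows "DR y x x z x = 0"
proof -
  let ?f = "e t"
  define L where "L = \<bar>g x x\<bar> + 2 * \<bar>g x ?f\<bar> + 1"
  have L1: "L \<ge> 1" unfolding L_def by simp
  define P where "P lam = DR y (x + lam *\<^sub>R ?f) (x + lam *\<^sub>R ?f) z (x + lam *\<^sub>R ?f)" for lam
  define c1 where "c1 = DR y ?f x z x + DR y x ?f z x + DR y x x z ?f"
  define c2 where "c2 = DR y ?f ?f z x + DR y ?f x z ?f + DR y x ?f z ?f"
  define c3 where "c3 = DR y ?f ?f z ?f"
  have Pexp: "P lam = DR y x x z x + lam * c1 + lam^2 * c2 + lam^3 * c3" for lam
    unfolding P_def c1_def c2_def c3_def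
    by (simp add: D_simps algebra_simps power2_eq_square power3_eq_cube)
  have Pz: "P lam = 0" if "lam \<ge> L" for lam
  proof -
    have "g (x + lam *\<^sub>R ?f) (x + lam *\<^sub>R ?f) = g x x + 2 * lam * g x ?f - lam * lam"
      using ob_t[OF ob] sy[of ?f x] by (simp add: g_simps algebra_simps)
    also have "\<dots> < 0" by (rule neg_big) (use that in \<open>simp add: L_def\<close>)
    finally show ?thesis unfolding P_def by (rule timelike_zero[OF ob])
  qed
  have "DR y x x z x = 4 * P L - 6 * P (2*L) + 4 * P (3*L) - P (4*L)"
    unfolding Pexp by (simp add: algebra_simps power2_eq_square power3_eq_cube)
  also have "\<dots> = 0" using Pz L1 by simp
  finally show ?thesis .
qed

end

end

theorem theorem1p6:
  fixes g :: "real^'n \<Rightarrow> real^'n \<Rightarrow> real"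
    and DR :: "real^'n \<Rightarrow> real^'n \<Rightarrow> real^'n \<Rightarrow> real^'n \<Rightarrow> real^'n \<Rightarrow> real"
  assumes "CARD('n) \<ge> 3"
    and "lorentzian g"
    and "cov_deriv_alg_curv DR"
    and "\<exists>c. \<forall>x. g x x = 1 \<longrightarrow> trace (matrix (szabo g DR x \<circ> szabo g DR x)) = c"
    and "\<exists>c. \<forall>x. g x x = -1 \<longrightarrow> trace (matrix (szabo g DR x \<circ> szabo g DR x)) = c"
  shows "DR = (\<lambda>a b c d e. 0)"
proof -
  have bl: "bilinear g" using assms(2) unfolding lorentzian_def by (elim conjE)
  have sy: "\<forall>x y. g x y = g y x" using assms(2) unfolding lorentzian_def by (elim conjE)
  obtain e t where ob: "onb g e t" using lorentzian_onb[OF assms(2)] by blast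
  interpret ctx g DR
    by unfold_locales (use bl sy assms(3) in auto)
  obtain cm where cm: "\<forall>x. g x x = -1 \<longrightarrow> trace (matrix (szabo g DR x \<circ> szabo g DR x)) = cm"
    using assms(5) by blast
  have cm': "\<And>x. g x x = -1 \<Longrightarrow> Ftr x = cm" using cm unfolding Ftr_def by blast
  have Z: "\<And>x y z. DR y x x z x = 0" by (rule all_x_zero[OF cm' assms(1) ob])
  show ?thesis by (intro ext) (rule all_zero[OF Z])
qed

end
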